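(* Let $R$ be a commutative Noetherian ring with unity such that $\Gamma_E(R)$ is a fan graph with at least four vertices. Then: (1) $R$ has exactly one associated prime $\mathfrak p$, i.e. $\operatorname{Ass}(R)=\{\mathfrak p\}$; (2) $\mathfrak p^3=0$; (3) the characteristic of $R$ is $2$, $4$, or $8$.
   Context: For $x,y\in R$ write $x\sim y$ iff $\operatorname{ann}(x)=\operatorname{ann}(y)$; $[x]$ denotes the equivalence class of $x$. Let $Z^*(R)$ be the set of nonzero zero divisors of $R$. The graph $\Gamma_E(R)$ is the simple graph whose vertices are the classes $[x]$ with $x\in Z^*(R)$, two distinct vertices $[x],[y]$ being adjacent iff $xy=0$. A fan graph is a complete bipartite graph $K_{n,1}$ with $n\in\mathbb N\cup\{\infty\}$ (one central vertex adjacent to all others, and no other edges). $\operatorname{Ass}(R)$ is the set of prime ideals of the form $\operatorname{ann}(y)$, $y\in R$. *)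

theory Defs
  imports "HOL-Algebra.Ring_Divisibility" "HOL-Algebra.Ideal_Product"
begin

definition ann :: "('a, 'b) ring_scheme \<Rightarrow> 'a \<Rightarrow> 'a set" where
  "ann R x = {r \<in> carrier R. r \<otimes>\<^bsub>R\<^esub> x = \<zero>\<^bsub>R\<^esub>}"

definition zdiv_star :: "('a, 'b) ring_scheme \<Rightarrow> 'a set" where
  "zdiv_star R = {x \<in> carrier R. x \<noteq> \<zero>\<^bsub>R\<^esub> \<and>
      (\<exists>y \<in> carrier R. y \<noteq> \<zero>\<^bsub>R\<^esub> \<and> x \<otimes>\<^bsub>R\<^esub> y = \<zero>\<^bsub>R\<^esub>)}"

definition ann_class :: "('a, 'b) ring_scheme \<Rightarrow> 'a \<Rightarrow> 'a set" where
  "ann_class R x = {y \<in> carrier R. ann R y = ann R x}"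

definition GE_vertices :: "('a, 'b) ring_scheme \<Rightarrow> 'a set set" where
  "GE_vertices R = ann_class R ` zdiv_star R"

definition GE_adj :: "('a, 'b) ring_scheme \<Rightarrow> 'a set \<Rightarrow> 'a set \<Rightarrow> bool" where
  "GE_adj R A B \<longleftrightarrow> A \<noteq> B \<and> (\<exists>x \<in> A. \<exists>y \<in> B. x \<otimes>\<^bsub>R\<^esub> y = \<zero>\<^bsub>R\<^esub>)"

text \<open>Gamma_E(R) is a fan graph K_{n,1} (n finite or infinite): some central vertex
  adjacent to all other vertices, and no other edges.\<close>
definition GE_fan :: "('a, 'b) ring_scheme \<Rightarrow> bool" where
  "GE_fan R \<longleftrightarrow> (\<exists>c \<in> GE_vertices R. \<forall>A \<in> GE_vertices R. \<forall>B \<in> GE_vertices R.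
      GE_adj R A B \<longleftrightarrow> (A \<noteq> B \<and> (A = c \<or> B = c)))"

definition Ass :: "('a, 'b) ring_scheme \<Rightarrow> 'a set set" where
  "Ass R = {P. primeideal P R \<and> (\<exists>y \<in> carrier R. P = ann R y)}"

definition ring_char :: "('a, 'b) ring_scheme \<Rightarrow> nat" where
  "ring_char R = (if \<exists>n::nat. n > 0 \<and> add_pow R n \<one>\<^bsub>R\<^esub> = \<zero>\<^bsub>R\<^esub>
     then (LEAST n::nat. n > 0 \<and> add_pow R n \<one>\<^bsub>R\<^esub> = \<zero>\<^bsub>R\<^esub>) else 0)"

end

theory Submission
  imports Defs
begin

context cring begin

lemma ann_iff: "r \<in> ann R x \<longleftrightarrow> r \<in> carrier R \<and> r \<otimes> x = \<zero>"
  by (simp add: ann_def)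

lemma Z_iff: "x \<in> zdiv_star R \<longleftrightarrow> x \<in> carrier R \<and> x \<noteq> \<zero> \<and> (\<exists>y\<in>carrier R. y \<noteq> \<zero> \<and> x \<otimes> y = \<zero>)"
  by (simp add: zdiv_star_def)

lemma ZI: "x \<in> carrier R \<Longrightarrow> x \<noteq> \<zero> \<Longrightarrow> y \<in> carrier R \<Longrightarrow> y \<noteq> \<zero> \<Longrightarrow> y \<otimes> x = \<zero> \<Longrightarrow> x \<in> zdiv_star R"
  unfolding zdiv_star_def using m_comm by auto

lemma class_eq: "x \<in> carrier R \<Longrightarrow> y \<in> carrier R \<Longrightarrow>
   ann_class R x = ann_class R y \<longleftrightarrow> ann R x = ann R y"
  unfolding ann_class_def by blast

lemma ann_eq_mem: "ann R x = ann R y \<Longrightarrow> r \<in> carrier R \<Longrightarrow> r \<otimes> x = \<zero> \<longleftrightarrow> r \<otimes> y = \<zero>"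
  by (metis ann_iff)

lemma adj_iff: "x \<in> carrier R \<Longrightarrow> y \<in> carrier R \<Longrightarrow>
  GE_adj R (ann_class R x) (ann_class R y) \<longleftrightarrow> ann R x \<noteq> ann R y \<and> x \<otimes> y = \<zero>"
proof
  assume x: "x \<in> carrier R" and y: "y \<in> carrier R"
  assume "GE_adj R (ann_class R x) (ann_class R y)"
  then obtain x' y' where cl: "ann_class R x \<noteq> ann_class R y" and x': "x' \<in> ann_class R x"
    and y': "y' \<in> ann_class R y" and p: "x' \<otimes> y' = \<zero>" unfolding GE_adj_def by blast
  from x' have x'c: "x' \<in> carrier R" and ax: "ann R x' = ann R x" by (auto simp: ann_class_def)
  from y' have y'c: "y' \<in> carrier R" and ay: "ann R y' = ann R y" by (auto simp: ann_class_def)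
  have "y' \<otimes> x' = \<zero>" using p m_comm x'c y'c by simp
  hence "y' \<otimes> x = \<zero>" using ann_eq_mem[OF ax] y'c by simp
  hence "x \<otimes> y' = \<zero>" using m_comm x y'c by simp
  hence "x \<otimes> y = \<zero>" using ann_eq_mem[OF ay] x by simp
  thus "ann R x \<noteq> ann R y \<and> x \<otimes> y = \<zero>" using cl class_eq x y by simp
next
  assume x: "x \<in> carrier R" and y: "y \<in> carrier R"
  assume "ann R x \<noteq> ann R y \<and> x \<otimes> y = \<zero>"
  thus "GE_adj R (ann_class R x) (ann_class R y)" unfolding GE_adj_def
    using class_eq x y by (auto simp: ann_class_def)
qed

lemma ann_zero: "ann R \<zero> = carrier R"
  unfolding ann_def by auto

lemma ann_ideal: assumes x: "x \<in> carrier R" shows "ideal (ann R x) R"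
proof (rule idealI[OF ring_axioms])
  show "subgroup (ann R x) (add_monoid R)"
  proof (rule add.subgroupI)
    show "ann R x \<subseteq> carrier R" by (auto simp: ann_def)
    show "ann R x \<noteq> {}" using x by (auto simp: ann_def intro!: exI[of _ \<zero>])
    fix a assume "a \<in> ann R x"
    hence a: "a \<in> carrier R" "a \<otimes> x = \<zero>" by (auto simp: ann_def)
    have "(\<ominus> a) \<otimes> x = \<ominus> (a \<otimes> x)" using a x by (simp add: l_minus)
    thus "\<ominus> a \<in> ann R x" using a by (simp add: ann_def)
  next
    fix a b assume "a \<in> ann R x" "b \<in> ann R x"
    thus "a \<oplus> b \<in> ann R x" using x by (auto simp: ann_def l_distr)
  qed
next
  fix a y assume "a \<in> ann R x" "y \<in> carrier R"
  thus "y \<otimes> a \<in> ann R x" using x by (auto simp: ann_def m_assoc)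
next
  fix a y assume "a \<in> ann R x" "y \<in> carrier R"
  thus "a \<otimes> y \<in> ann R x" using x by (auto simp: ann_def) (metis m_assoc m_comm r_null)
qed

end

locale star = cring +
  fixes c y1 y2 y3 :: 'a
  assumes cZ: "c \<in> zdiv_star R"
  and F1: "\<And>x. x \<in> zdiv_star R \<Longrightarrow> ann R x \<noteq> ann R c \<Longrightarrow> x \<otimes> c = \<zero>"
  and F2: "\<And>x y. x \<in> zdiv_star R \<Longrightarrow> y \<in> zdiv_star R \<Longrightarrow> ann R x \<noteq> ann R c \<Longrightarrow>
      ann R y \<noteq> ann R c \<Longrightarrow> ann R x \<noteq> ann R y \<Longrightarrow> x \<otimes> y \<noteq> \<zero>"
  and Y: "y1 \<in> zdiv_star R" "y2 \<in> zdiv_star R" "y3 \<in> zdiv_star R"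
  and Yc: "ann R y1 \<noteq> ann R c" "ann R y2 \<noteq> ann R c" "ann R y3 \<noteq> ann R c"
  and Yd: "ann R y1 \<noteq> ann R y2" "ann R y1 \<noteq> ann R y3" "ann R y2 \<noteq> ann R y3"
begin

lemma Zc: "x \<in> zdiv_star R \<Longrightarrow> x \<in> carrier R" and Znz: "x \<in> zdiv_star R \<Longrightarrow> x \<noteq> \<zero>"
  by (auto simp: zdiv_star_def)

lemma cc: "c \<in> carrier R" "c \<noteq> \<zero>" using cZ Zc Znz by auto

lemma sq_aux:
  assumes d: "d \<in> zdiv_star R" "ann R d \<noteq> ann R c" and e: "e \<in> zdiv_star R" "ann R e \<noteq> ann R c"
    and de: "ann R d \<noteq> ann R e" and ncc: "c \<otimes> c \<noteq> \<zero>"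
    and u: "u \<in> carrier R" "u \<otimes> d = \<zero>" "u \<otimes> c = \<zero>"
  shows "u = \<zero>"
proof (rule ccontr)
  assume un: "u \<noteq> \<zero>"
  have dc: "d \<in> carrier R" "d \<otimes> c = \<zero>" using d F1 Zc by auto
  have ec: "e \<in> carrier R" "e \<otimes> c = \<zero>" using e F1 Zc by auto
  define w where "w = d \<oplus> c"
  have wc: "w \<in> carrier R" using dc cc by (simp add: w_def)
  have "w \<otimes> c = c \<otimes> c" using dc cc(1) unfolding w_def by algebra
  hence wcn: "w \<otimes> c \<noteq> \<zero>" using ncc by simp
  hence wn: "w \<noteq> \<zero>" using cc by auto
  have "u \<otimes> w = \<zero>" using u dc cc(1) unfolding w_def by algebra
  hence wZ: "w \<in> zdiv_star R" using ZI[OF wc wn u(1) un] by simp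
  have "ann R w = ann R c" using F1[OF wZ] wcn by blast
  moreover have "e \<in> ann R c" using ec by (simp add: ann_iff)
  ultimately have "e \<in> ann R w" by simp
  hence "e \<otimes> w = \<zero>" by (simp add: ann_iff)
  hence "e \<otimes> d = \<zero>" using ec dc cc(1) unfolding w_def by algebra
  thus False using F2[OF e(1) d(1) e(2) d(2)] de by auto
qed

lemma c_sq: "c \<otimes> c = \<zero>"
proof (rule ccontr)
  assume ncc: "c \<otimes> c \<noteq> \<zero>"
  have y: "y1 \<in> carrier R" "y2 \<in> carrier R" "y1 \<otimes> c = \<zero>" "y2 \<otimes> c = \<zero>"
    using Y Yc F1 Zc by auto
  have "ann R y1 \<subseteq> ann R y2"
  proof
    fix u assume "u \<in> ann R y1"
    hence u: "u \<in> carrier R" "u \<otimes> y1 = \<zero>" by (auto simp: ann_iff)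
    have "u \<otimes> y2 \<in> carrier R" using u y by simp
    moreover have "(u \<otimes> y2) \<otimes> y1 = (u \<otimes> y1) \<otimes> y2" using u(1) y by (simp add: m_ac)
    hence "(u \<otimes> y2) \<otimes> y1 = \<zero>" using u y by (metis l_null)
    moreover have "(u \<otimes> y2) \<otimes> c = \<zero>" using u y cc(1) by (simp add: m_assoc)
    ultimately have "u \<otimes> y2 = \<zero>" by (rule sq_aux[OF Y(1) Yc(1) Y(2) Yc(2) Yd(1) ncc])
    thus "u \<in> ann R y2" using u by (simp add: ann_iff)
  qed
  moreover have "ann R y2 \<subseteq> ann R y1"
  proof
    fix u assume "u \<in> ann R y2"
    hence u: "u \<in> carrier R" "u \<otimes> y2 = \<zero>" by (auto simp: ann_iff)
    have "u \<otimes> y1 \<in> carrier R" using u y by simp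
    moreover have "(u \<otimes> y1) \<otimes> y2 = (u \<otimes> y2) \<otimes> y1" using u(1) y by (simp add: m_ac)
    hence "(u \<otimes> y1) \<otimes> y2 = \<zero>" using u y by (metis l_null)
    moreover have "(u \<otimes> y1) \<otimes> c = \<zero>" using u y cc(1) by (simp add: m_assoc)
    ultimately have "u \<otimes> y1 = \<zero>" by (rule sq_aux[OF Y(2) Yc(2) Y(1) Yc(1) Yd(1)[symmetric] ncc])
    thus "u \<in> ann R y1" using u by (simp add: ann_iff)
  qed
  ultimately show False using Yd(1) by blast
qed

lemma kill_c: "x \<in> zdiv_star R \<Longrightarrow> x \<otimes> c = \<zero>"
proof -
  assume x: "x \<in> zdiv_star R"
  show ?thesis
  proof (cases "ann R x = ann R c")
    case True
    have "c \<in> ann R c" using c_sq cc by (simp add: ann_iff)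
    hence "c \<in> ann R x" using True by simp
    hence "c \<otimes> x = \<zero>" by (simp add: ann_iff)
    thus ?thesis using m_comm cc Zc[OF x] by simp
  next
    case False thus ?thesis using F1 x by blast
  qed
qed

lemma A_Z: "a \<in> carrier R \<Longrightarrow> a \<noteq> \<zero> \<Longrightarrow> a \<otimes> c = \<zero> \<Longrightarrow> a \<in> zdiv_star R"
  using ZI[of a c] cc m_comm by auto

lemma A_prime: "primeideal (ann R c) R"
proof (rule primeidealI[OF ann_ideal[OF cc(1)] is_cring])
  show "carrier R \<noteq> ann R c"
  proof
    assume "carrier R = ann R c"
    hence "\<one> \<otimes> c = \<zero>" by (metis ann_iff one_closed)
    thus False using cc by simp
  qed
next
  fix a b assume a: "a \<in> carrier R" and b: "b \<in> carrier R" and ab: "a \<otimes> b \<in> ann R c"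
  hence abc: "a \<otimes> (b \<otimes> c) = \<zero>" using cc by (simp add: ann_iff m_assoc)
  show "a \<in> ann R c \<or> b \<in> ann R c"
  proof (cases "b \<otimes> c = \<zero>")
    case True thus ?thesis using b by (simp add: ann_iff)
  next
    case False
    show ?thesis
    proof (cases "a = \<zero>")
      case True thus ?thesis using cc by (simp add: ann_iff)
    next
      case an: False
      have "(b \<otimes> c) \<otimes> a = \<zero>" using abc a b cc m_comm by simp
      hence "a \<in> zdiv_star R" using ZI[OF a an _ False] b cc by simp
      thus ?thesis using kill_c a by (simp add: ann_iff)
    qed
  qed
qed

definition Icen where "Icen = {u \<in> carrier R. u = \<zero> \<or> ann R u = ann R c}"

lemma Icen_kills: "u \<in> Icen \<Longrightarrow> a \<in> ann R c \<Longrightarrow> u \<otimes> a = \<zero>"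
proof -
  assume u: "u \<in> Icen" and a: "a \<in> ann R c"
  show ?thesis
  proof (cases "u = \<zero>")
    case True thus ?thesis using a by (simp add: ann_iff)
  next
    case False
    hence "ann R u = ann R c" using u by (simp add: Icen_def)
    hence "a \<in> ann R u" using a by simp
    hence "a \<otimes> u = \<zero>" by (simp add: ann_iff)
    thus ?thesis using a u m_comm by (simp add: ann_iff Icen_def)
  qed
qed

lemma L0:
  assumes d: "d \<in> zdiv_star R" "ann R d \<noteq> ann R c" and dd: "d \<otimes> d \<noteq> \<zero>"
  shows "ann R d = Icen"
proof
  have dc: "d \<in> carrier R" using Zc d by simp
  show "ann R d \<subseteq> Icen"
  proof
    fix u assume "u \<in> ann R d"
    hence u: "u \<in> carrier R" "u \<otimes> d = \<zero>" by (auto simp: ann_iff)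
    show "u \<in> Icen"
    proof (rule ccontr)
      assume nI: "u \<notin> Icen"
      hence un: "u \<noteq> \<zero>" and uc: "ann R u \<noteq> ann R c" using u by (auto simp: Icen_def)
      have "d \<otimes> u = \<zero>" using u dc m_comm by simp
      hence uZ: "u \<in> zdiv_star R" using ZI[OF u(1) un dc Znz[OF d(1)]] by simp
      have "ann R u = ann R d" using F2[OF uZ d(1) uc d(2)] u by blast
      moreover have "d \<in> ann R u" using \<open>d \<otimes> u = \<zero>\<close> dc by (simp add: ann_iff)
      ultimately have "d \<otimes> d = \<zero>" by (simp add: ann_iff)
      thus False using dd by simp
    qed
  qed
  show "Icen \<subseteq> ann R d"
  proof
    fix u assume u: "u \<in> Icen"
    have "d \<in> ann R c" using kill_c d dc by (simp add: ann_iff)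
    hence "u \<otimes> d = \<zero>" using Icen_kills u by blast
    thus "u \<in> ann R d" using u by (simp add: ann_iff Icen_def)
  qed
qed

lemma Ass_eq: "Ass R = {ann R c}"
proof
  show "{ann R c} \<subseteq> Ass R" using A_prime cc by (auto simp: Ass_def)
  show "Ass R \<subseteq> {ann R c}"
  proof
    fix P assume "P \<in> Ass R"
    then obtain y where P: "primeideal P R" and y: "y \<in> carrier R" and Py: "P = ann R y"
      by (auto simp: Ass_def)
    interpret P: primeideal P R by (rule P)
    have "c \<otimes> c \<in> P" using c_sq P.I_prime by (simp add: P.zero_closed)
    hence cP: "c \<in> P" using P.I_prime cc by blast
    hence cy: "c \<otimes> y = \<zero>" using Py by (simp add: ann_iff)
    have yn: "y \<noteq> \<zero>"
    proof
      assume "y = \<zero>"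
      hence "P = carrier R" using Py ann_zero by simp
      thus False using P.I_notcarr by simp
    qed
    have yZ: "y \<in> zdiv_star R" using ZI[OF y yn cc(1) cc(2) cy] .
    show "P \<in> {ann R c}"
    proof (cases "ann R y = ann R c")
      case True thus ?thesis using Py by simp
    next
      case yc: False
      have key: "ann R d = Icen" if d: "d \<in> zdiv_star R" "ann R d \<noteq> ann R c" "ann R d \<noteq> ann R y" for d
      proof -
        have dc: "d \<in> carrier R" using Zc d by simp
        have "d \<otimes> y \<noteq> \<zero>" using F2[OF d(1) yZ d(2) yc d(3)] .
        hence "d \<notin> P" using Py by (simp add: ann_iff)
        hence "d \<otimes> d \<notin> P" using P.I_prime dc by blast
        hence "d \<otimes> d \<noteq> \<zero>" using P.zero_closed by auto
        thus ?thesis using L0 d by blast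
      qed
      show ?thesis
      proof (cases "ann R y1 = ann R y")
        case True
        have "ann R y2 \<noteq> ann R y" "ann R y3 \<noteq> ann R y" using True Yd by auto
        hence "ann R y2 = Icen" "ann R y3 = Icen" using key[OF Y(2) Yc(2)] key[OF Y(3) Yc(3)] by auto
        thus ?thesis using Yd by simp
      next
        case n1: False
        show ?thesis
        proof (cases "ann R y2 = ann R y")
          case True
          have "ann R y1 \<noteq> ann R y" "ann R y3 \<noteq> ann R y" using True Yd by auto
          hence "ann R y1 = Icen" "ann R y3 = Icen" using key[OF Y(1) Yc(1)] key[OF Y(3) Yc(3)] by auto
          thus ?thesis using Yd by simp
        next
          case False
          hence "ann R y1 = Icen" "ann R y2 = Icen" using key[OF Y(1) Yc(1)] key[OF Y(2) Yc(2)] n1 by auto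
          thus ?thesis using Yd by simp
        qed
      qed
    qed
  qed
qed

lemma two_sq: "\<exists>e f. e \<in> zdiv_star R \<and> f \<in> zdiv_star R \<and> ann R e \<noteq> ann R c \<and> ann R f \<noteq> ann R c
   \<and> ann R e \<noteq> ann R f \<and> e \<otimes> e = \<zero> \<and> f \<otimes> f = \<zero>"
proof -
  have k: "ann R d = Icen" if "d \<in> zdiv_star R" "ann R d \<noteq> ann R c" "d \<otimes> d \<noteq> \<zero>" for d
    using L0 that by blast
  show ?thesis
  proof (cases "y1 \<otimes> y1 = \<zero>")
    case True
    show ?thesis
    proof (cases "y2 \<otimes> y2 = \<zero>")
      case True2: True
      thus ?thesis using True Y Yc Yd by blast
    next
      case False
      hence "ann R y2 = Icen" using k Y Yc by blast
      hence "y3 \<otimes> y3 = \<zero>" using k[OF Y(3) Yc(3)] Yd(3) by auto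
      thus ?thesis using True Y Yc Yd by blast
    qed
  next
    case False
    hence "ann R y1 = Icen" using k Y Yc by blast
    hence "y2 \<otimes> y2 = \<zero>" "y3 \<otimes> y3 = \<zero>" using k[OF Y(2) Yc(2)] k[OF Y(3) Yc(3)] Yd(1,2) by auto
    thus ?thesis using Y Yc Yd by blast
  qed
qed

lemma L1:
  assumes d: "d \<in> zdiv_star R" "ann R d \<noteq> ann R c" and u: "u \<in> carrier R" "u \<otimes> d = \<zero>" "u \<notin> Icen"
  shows "ann R u = ann R d"
proof -
  have un: "u \<noteq> \<zero>" and uc: "ann R u \<noteq> ann R c" using u by (auto simp: Icen_def)
  have dc: "d \<in> carrier R" using Zc d by simp
  have "d \<otimes> u = \<zero>" using u dc m_comm by simp
  hence uZ: "u \<in> zdiv_star R" using ZI[OF u(1) un dc Znz[OF d(1)]] by simp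
  show ?thesis using F2[OF uZ d(1) uc d(2)] u by blast
qed

lemma L2:
  assumes e: "e \<in> zdiv_star R" "ann R e \<noteq> ann R c" and f: "f \<in> zdiv_star R" "ann R f \<noteq> ann R c"
    and ef: "ann R e \<noteq> ann R f"
    and z: "z \<in> carrier R" "e \<otimes> z = \<zero>" "f \<otimes> z = \<zero>"
  shows "z \<in> Icen"
proof (rule ccontr)
  assume nI: "z \<notin> Icen"
  hence zn: "z \<noteq> \<zero>" and zc: "ann R z \<noteq> ann R c" using z by (auto simp: Icen_def)
  have ec: "e \<in> carrier R" "f \<in> carrier R" using Zc e f by auto
  have "z \<otimes> e = \<zero>" using z ec m_comm by simp
  hence zZ: "z \<in> zdiv_star R" using ZI[OF z(1) zn ec(1) Znz[OF e(1)]] z by simp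
  have eI: "e \<notin> Icen" "f \<notin> Icen" using e f Znz by (auto simp: Icen_def)
  have "ann R e = ann R z" by (rule L1[OF zZ zc ec(1) z(2) eI(1)])
  moreover have "ann R f = ann R z" by (rule L1[OF zZ zc ec(2) z(3) eI(2)])
  ultimately show False using ef by simp
qed

lemma main_ef: "\<exists>e f. e \<in> zdiv_star R \<and> f \<in> zdiv_star R \<and> ann R e \<noteq> ann R c \<and> ann R f \<noteq> ann R c
   \<and> ann R e \<noteq> ann R f \<and> e \<otimes> e = \<zero> \<and> f \<otimes> f = \<zero> \<and>
   (\<forall>a\<in>ann R c. \<forall>b\<in>ann R c. a \<otimes> b \<in> Icen) \<and> e \<otimes> f \<in> Icen"
proof -
  obtain e f where e: "e \<in> zdiv_star R" "ann R e \<noteq> ann R c" and f: "f \<in> zdiv_star R" "ann R f \<noteq> ann R c"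
    and ef: "ann R e \<noteq> ann R f" and ee: "e \<otimes> e = \<zero>" and ff: "f \<otimes> f = \<zero>"
    using two_sq by blast
  have ec: "e \<in> carrier R" "f \<in> carrier R" using Zc e f by auto
  have L2': "z \<in> Icen" if "z \<in> carrier R" "e \<otimes> z = \<zero>" "f \<otimes> z = \<zero>" for z
    by (rule L2[OF e f ef that])
  have efI: "e \<otimes> f \<in> Icen"
  proof (rule L2')
    show "e \<otimes> f \<in> carrier R" using ec by simp
    show "e \<otimes> (e \<otimes> f) = \<zero>" using ec ee by (simp add: m_assoc[symmetric])
    have "f \<otimes> (e \<otimes> f) = e \<otimes> (f \<otimes> f)" using ec by (simp add: m_lcomm)
    thus "f \<otimes> (e \<otimes> f) = \<zero>" using ec ff by simp
  qed
  have aeI: "a \<otimes> e \<in> Icen \<and> a \<otimes> f \<in> Icen" if a: "a \<in> ann R c" for a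
  proof -
    have ac: "a \<in> carrier R" using a by (simp add: ann_iff)
    have k: "(e \<otimes> f) \<otimes> a = \<zero>" using Icen_kills efI a by blast
    have "a \<otimes> e \<in> Icen"
    proof (rule L2')
      show "a \<otimes> e \<in> carrier R" using ec ac by simp
      have "e \<otimes> (a \<otimes> e) = a \<otimes> (e \<otimes> e)" using ec ac by (simp add: m_lcomm)
      thus "e \<otimes> (a \<otimes> e) = \<zero>" using ee ac by simp
      have "f \<otimes> (a \<otimes> e) = (e \<otimes> f) \<otimes> a" using ec ac by (simp add: m_ac)
      thus "f \<otimes> (a \<otimes> e) = \<zero>" using k by simp
    qed
    moreover have "a \<otimes> f \<in> Icen"
    proof (rule L2')
      show "a \<otimes> f \<in> carrier R" using ec ac by simp
      have "f \<otimes> (a \<otimes> f) = a \<otimes> (f \<otimes> f)" using ec ac by (simp add: m_lcomm)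
      thus "f \<otimes> (a \<otimes> f) = \<zero>" using ff ac by simp
      have "e \<otimes> (a \<otimes> f) = (e \<otimes> f) \<otimes> a" using ec ac by (simp add: m_ac)
      thus "e \<otimes> (a \<otimes> f) = \<zero>" using k by simp
    qed
    ultimately show ?thesis by simp
  qed
  have "a \<otimes> b \<in> Icen" if a: "a \<in> ann R c" and b: "b \<in> ann R c" for a b
  proof (rule L2')
    have ac: "a \<in> carrier R" "b \<in> carrier R" using a b by (auto simp: ann_iff)
    show "a \<otimes> b \<in> carrier R" using ac by simp
    have "e \<otimes> (a \<otimes> b) = (b \<otimes> e) \<otimes> a" using ec ac by (simp add: m_ac)
    thus "e \<otimes> (a \<otimes> b) = \<zero>" using Icen_kills aeI[OF b] a by simp
    have "f \<otimes> (a \<otimes> b) = (b \<otimes> f) \<otimes> a" using ec ac by (simp add: m_ac)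
    thus "f \<otimes> (a \<otimes> b) = \<zero>" using Icen_kills aeI[OF b] a by simp
  qed
  thus ?thesis using e f ef ee ff efI by blast
qed

lemma A3: "a \<in> ann R c \<Longrightarrow> b \<in> ann R c \<Longrightarrow> d \<in> ann R c \<Longrightarrow> a \<otimes> b \<otimes> d = \<zero>"
  using main_ef Icen_kills by blast

lemma two_A: "\<one> \<oplus> \<one> \<in> ann R c"
proof -
  obtain e f where e: "e \<in> zdiv_star R" "ann R e \<noteq> ann R c" and f: "f \<in> zdiv_star R" "ann R f \<noteq> ann R c"
    and ef: "ann R e \<noteq> ann R f" and ee: "e \<otimes> e = \<zero>" and ff: "f \<otimes> f = \<zero>" and efI: "e \<otimes> f \<in> Icen"
    using main_ef by blast
  have ec: "e \<in> carrier R" "f \<in> carrier R" using Zc e f by auto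
  have efn: "e \<otimes> f \<noteq> \<zero>" using F2[OF e(1) f(1) e(2) f(2) ef] .
  hence annef: "ann R (e \<otimes> f) = ann R c" using efI by (simp add: Icen_def)
  define u where "u = e \<oplus> f"
  define v where "v = e \<ominus> f"
  have uv: "u \<in> carrier R" "v \<in> carrier R" using ec by (auto simp: u_def v_def)
  have usq: "u \<otimes> u = (e \<otimes> e \<oplus> f \<otimes> f) \<oplus> ((e \<otimes> f) \<oplus> (e \<otimes> f))" using ec unfolding u_def by algebra
  have uv0': "u \<otimes> v = e \<otimes> e \<ominus> f \<otimes> f" using ec unfolding u_def v_def by algebra
  hence uv0: "u \<otimes> v = \<zero>" using ee ff by simp
  have "u \<otimes> u = \<zero>"
  proof (cases "u = \<zero>")
    case True thus ?thesis by simp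
  next
    case un: False
    have vn: "v \<noteq> \<zero>"
    proof
      assume "v = \<zero>"
      moreover have "e = v \<oplus> f" using ec unfolding v_def by algebra
      ultimately have "e = f" using ec by simp
      thus False using ef by simp
    qed
    have uZ: "u \<in> zdiv_star R" using ZI[OF uv(1) un uv(2) vn] uv0 uv m_comm by simp
    have vZ: "v \<in> zdiv_star R" using ZI[OF uv(2) vn uv(1) un] uv0 by simp
    have eA: "e \<in> ann R c" using kill_c e ec by (simp add: ann_iff)
    have ue: "e \<otimes> u = e \<otimes> e \<oplus> e \<otimes> f" using ec unfolding u_def by algebra
    hence ue': "e \<otimes> u \<noteq> \<zero>" using ee efn ec by simp
    have ve: "e \<otimes> v = e \<otimes> e \<ominus> e \<otimes> f" using ec unfolding v_def by algebra
    have ve': "e \<otimes> v \<noteq> \<zero>"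
    proof
      assume "e \<otimes> v = \<zero>"
      hence "\<ominus> (e \<otimes> f) = \<zero>" using ve ee ec by (simp add: minus_eq)
      thus False using efn ec by (metis minus_minus m_closed minus_zero)
    qed
    have uc: "ann R u \<noteq> ann R c"
    proof
      assume "ann R u = ann R c"
      hence "e \<in> ann R u" using eA by simp
      hence "e \<otimes> u = \<zero>" using ec uv m_comm by (simp add: ann_iff)
      thus False using ue' by simp
    qed
    have vc: "ann R v \<noteq> ann R c"
    proof
      assume "ann R v = ann R c"
      hence "e \<in> ann R v" using eA by simp
      hence "e \<otimes> v = \<zero>" using ec uv m_comm by (simp add: ann_iff)
      thus False using ve' by simp
    qed
    have "ann R u = ann R v" using F2[OF uZ vZ uc vc] uv0 by blast
    moreover have "u \<in> ann R v" using uv0 uv by (simp add: ann_iff)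
    ultimately have "u \<in> ann R u" by simp
    thus ?thesis by (simp add: ann_iff)
  qed
  hence "(e \<otimes> f) \<oplus> (e \<otimes> f) = \<zero>" using usq ee ff ec by simp
  moreover have "(\<one> \<oplus> \<one>) \<otimes> (e \<otimes> f) = (e \<otimes> f) \<oplus> (e \<otimes> f)" using ec by algebra
  ultimately have "\<one> \<oplus> \<one> \<in> ann R (e \<otimes> f)" by (simp add: ann_iff)
  thus ?thesis using annef by simp
qed

lemma ap_add: "x \<in> carrier R \<Longrightarrow> add_pow R ((m::nat) + n) x = add_pow R m x \<oplus> add_pow R n x"
  by (simp add: add.nat_pow_mult)

lemma ap_mult: "x \<in> carrier R \<Longrightarrow> add_pow R ((m::nat) * n) x = add_pow R m (add_pow R n x)"
  by (simp add: add.nat_pow_pow mult.commute)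

lemma ap_zero: "add_pow R (n::nat) \<zero> = \<zero>"
  by (simp add: add.nat_pow_one)

lemma ap1: "add_pow R (1::nat) \<one> = \<one>" by simp
lemma ap2: "add_pow R (2::nat) \<one> = \<one> \<oplus> \<one>" by (simp add: numeral_2_eq_2)

lemma ap8: "add_pow R (8::nat) \<one> = \<zero>"
proof -
  define t where "t = \<one> \<oplus> \<one>"
  have tA: "t \<in> ann R c" using two_A by (simp add: t_def)
  have tc: "t \<in> carrier R" by (simp add: t_def)
  have "t \<otimes> t = add_pow R (2::nat) t" using add_pow_ldistr[of "\<one>" t 2] tc by (simp add: ap2 t_def)
  also have "\<dots> = add_pow R (4::nat) \<one>" using ap_mult[of "\<one>" 2 2] by (simp add: ap2 t_def)
  finally have tt: "t \<otimes> t = add_pow R (4::nat) \<one>" .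
  have "t \<otimes> t \<otimes> t = add_pow R (4::nat) t" using add_pow_rdistr[of "add_pow R (4::nat) \<one>" "\<one>" 2] tt tc
    add_pow_ldistr[of "\<one>" t 4] by simp
  also have "\<dots> = add_pow R (8::nat) \<one>" using ap_mult[of "\<one>" 4 2] by (simp add: ap2 t_def)
  finally have "t \<otimes> t \<otimes> t = add_pow R (8::nat) \<one>" .
  thus ?thesis using A3[OF tA tA tA] by simp
qed

lemma one_nz: "\<one> \<noteq> \<zero>"
proof
  assume "\<one> = \<zero>"
  hence "c = \<zero>" using cc by (metis l_one l_null)
  thus False using cc by simp
qed

lemma char: "ring_char R \<in> {2, 4, 8}"
proof -
  define Q where "Q = (\<lambda>n::nat. n > 0 \<and> add_pow R n \<one> = \<zero>)"
  have Q8: "Q 8" using ap8 by (simp add: Q_def)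
  have ex: "\<exists>n::nat. n > 0 \<and> add_pow R n \<one> = \<zero>" using Q8 unfolding Q_def by blast
  have rc: "ring_char R = (LEAST n. Q n)" unfolding ring_char_def Q_def using ex by simp
  define m where "m = (LEAST n. Q n)"
  have Qm: "Q m" using LeastI[of Q 8] Q8 by (simp add: m_def)
  have m8: "m \<le> 8" using Least_le[of Q 8] Q8 by (simp add: m_def)
  have mn: "\<And>k. k < m \<Longrightarrow> \<not> Q k" using not_less_Least m_def by blast
  have m0: "m > 0" and am: "add_pow R m \<one> = \<zero>" using Qm by (auto simp: Q_def)
  have a8: "add_pow R (8::nat) \<one> = \<zero>" by (rule ap8)
  have "m \<in> {1,2,3,4,5,6,7,8}" using m0 m8 by auto
  moreover have "m \<noteq> 1"
  proof
    assume m1: "m = 1"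
    have x: "add_pow R (1::nat) \<one> = \<zero>" using am unfolding m1 .
    show False using one_nz trans[OF ap1[symmetric] x] by (rule notE)
  qed
  moreover have "m \<noteq> 3"
  proof
    assume m3: "m = 3"
    have x: "add_pow R (3::nat) \<one> = \<zero>" using am unfolding m3 .
    have "add_pow R (3 * 3::nat) \<one> = add_pow R (3::nat) (add_pow R (3::nat) \<one>)" by (rule ap_mult) simp
    also have "\<dots> = \<zero>" unfolding x by (rule ap_zero)
    finally have y: "add_pow R (8 + 1::nat) \<one> = \<zero>" by simp
    have "add_pow R (8 + 1::nat) \<one> = add_pow R (8::nat) \<one> \<oplus> add_pow R (1::nat) \<one>" by (rule ap_add) simp
    also have "\<dots> = \<one>" unfolding a8 ap1 by simp
    finally have "\<one> = \<zero>" using y by simp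
    thus False using one_nz by (rule notE[rotated])
  qed
  moreover have "m \<noteq> 5"
  proof
    assume m5: "m = 5"
    have x: "add_pow R (5::nat) \<one> = \<zero>" using am unfolding m5 .
    have "add_pow R (5 * 5::nat) \<one> = add_pow R (5::nat) (add_pow R (5::nat) \<one>)" by (rule ap_mult) simp
    also have "\<dots> = \<zero>" unfolding x by (rule ap_zero)
    finally have y: "add_pow R (24 + 1::nat) \<one> = \<zero>" by simp
    have z: "add_pow R (3 * 8::nat) \<one> = add_pow R (3::nat) (add_pow R (8::nat) \<one>)" by (rule ap_mult) simp
    also have "\<dots> = \<zero>" unfolding a8 by (rule ap_zero)
    finally have z: "add_pow R (24::nat) \<one> = \<zero>" by simp
    have "add_pow R (24 + 1::nat) \<one> = add_pow R (24::nat) \<one> \<oplus> add_pow R (1::nat) \<one>" by (rule ap_add) simp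
    also have "\<dots> = \<one>" unfolding z ap1 by simp
    finally have "\<one> = \<zero>" using y by simp
    thus False using one_nz by (rule notE[rotated])
  qed
  moreover have "m \<noteq> 6"
  proof
    assume m6: "m = 6"
    have x: "add_pow R (6::nat) \<one> = \<zero>" using am unfolding m6 .
    have "add_pow R (6 + 2::nat) \<one> = add_pow R (6::nat) \<one> \<oplus> add_pow R (2::nat) \<one>" by (rule ap_add) simp
    also have "\<dots> = add_pow R (2::nat) \<one>" unfolding x by simp
    finally have "add_pow R (2::nat) \<one> = \<zero>" using a8 by simp
    hence "Q 2" unfolding Q_def by simp
    moreover have "\<not> Q 2" using mn[of 2] m6 by simp
    ultimately show False by (rule notE[rotated])
  qed
  moreover have "m \<noteq> 7"
  proof
    assume m7: "m = 7"
    have x: "add_pow R (7::nat) \<one> = \<zero>" using am unfolding m7 .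
    have "add_pow R (7 + 1::nat) \<one> = add_pow R (7::nat) \<one> \<oplus> add_pow R (1::nat) \<one>" by (rule ap_add) simp
    also have "\<dots> = \<one>" unfolding x ap1 by simp
    finally have "\<one> = \<zero>" using a8 by simp
    thus False using one_nz by (rule notE[rotated])
  qed
  ultimately have "m \<in> {2,4,8}" by blast
  thus ?thesis using rc m_def by simp
qed

lemma prod_kill: "s \<in> ann R c \<cdot> ann R c \<Longrightarrow> s \<in> carrier R \<and> (\<forall>d\<in>ann R c. s \<otimes> d = \<zero>)"
proof (induct s rule: ideal_prod.induct)
  case (prod i j)
  thus ?case using A3 by (auto simp: ann_iff)
next
  case (sum s1 s2)
  thus ?case by (auto simp: ann_iff l_distr)
qed

lemma prod3: "ann R c \<cdot> ann R c \<cdot> ann R c = {\<zero>}"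
proof
  show "ann R c \<cdot> ann R c \<cdot> ann R c \<subseteq> {\<zero>}"
  proof
    fix s assume "s \<in> ann R c \<cdot> ann R c \<cdot> ann R c"
    thus "s \<in> {\<zero>}"
    proof (induct s rule: ideal_prod.induct)
      case (prod i j) thus ?case using prod_kill by auto
    next
      case (sum s1 s2) thus ?case by simp
    qed
  qed
  have z: "\<zero> \<in> ann R c" using cc by (simp add: ann_iff)
  have "\<zero> \<otimes> \<zero> \<in> ann R c \<cdot> ann R c" using ideal_prod.prod[OF z z] .
  hence "\<zero> \<in> ann R c \<cdot> ann R c" by simp
  from ideal_prod.prod[where R=R, OF this z] show "{\<zero>} \<subseteq> ann R c \<cdot> ann R c \<cdot> ann R c" by simp
qed

end

lemma three_elems:
  assumes "c0 \<in> V" and "infinite V \<or> card V \<ge> 4"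
  shows "\<exists>a b d. a \<in> V \<and> b \<in> V \<and> d \<in> V \<and> a \<noteq> c0 \<and> b \<noteq> c0 \<and> d \<noteq> c0 \<and> a \<noteq> b \<and> a \<noteq> d \<and> b \<noteq> d"
proof -
  have "\<exists>B. card B = 3 \<and> B \<subseteq> V - {c0}"
  proof (cases "finite V")
    case False
    hence "infinite (V - {c0})" by simp
    from infinite_arbitrarily_large[OF this, of 3] show ?thesis by blast
  next
    case True
    hence "card V \<ge> 4" using assms(2) by blast
    moreover have "card (V - {c0}) = card V - 1" using assms(1) True by (simp add: card_Diff_singleton)
    ultimately have "3 \<le> card (V - {c0})" by linarith
    then obtain T where "T \<subseteq> V - {c0}" "card T = 3" by (rule obtain_subset_with_card_n)
    thus ?thesis by blast
  qed
  then obtain B where B: "card B = 3" "B \<subseteq> V - {c0}" by blast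
  then obtain x y z where xyz: "B = {x,y,z}" "x \<noteq> y" "y \<noteq> z" "x \<noteq> z" unfolding card_3_iff by blast
  have "x \<in> V - {c0}" "y \<in> V - {c0}" "z \<in> V - {c0}" using B(2) xyz(1) by auto
  thus ?thesis using xyz by blast
qed

theorem proposition2p4:
  fixes R :: "('a, 'b) ring_scheme"
  assumes "cring R" and "noetherian_ring R"
    and "GE_fan R"
    and "infinite (GE_vertices R) \<or> card (GE_vertices R) \<ge> 4"
  shows "\<exists>p. Ass R = {p}
           \<and> p \<cdot>\<^bsub>R\<^esub> p \<cdot>\<^bsub>R\<^esub> p = {\<zero>\<^bsub>R\<^esub>}
           \<and> ring_char R \<in> {2, 4, 8}"
proof -
  interpret cring R by fact
  obtain c0 where c0: "c0 \<in> GE_vertices R" and fan: "\<forall>A \<in> GE_vertices R. \<forall>B \<in> GE_vertices R.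
      GE_adj R A B \<longleftrightarrow> (A \<noteq> B \<and> (A = c0 \<or> B = c0))"
    using assms(3) unfolding GE_fan_def by blast
  obtain c where cZ: "c \<in> zdiv_star R" and c0c: "c0 = ann_class R c" using c0 unfolding GE_vertices_def by blast
  have Zc: "x \<in> carrier R" if "x \<in> zdiv_star R" for x using that by (simp add: zdiv_star_def)
  have V: "ann_class R x \<in> GE_vertices R" if "x \<in> zdiv_star R" for x using that by (simp add: GE_vertices_def)
  have ceq: "ann_class R x = ann_class R y \<longleftrightarrow> ann R x = ann R y"
    if "x \<in> zdiv_star R" "y \<in> zdiv_star R" for x y
    using class_eq[OF Zc[OF that(1)] Zc[OF that(2)]] .
  have adj: "GE_adj R (ann_class R x) (ann_class R y) \<longleftrightarrow> ann R x \<noteq> ann R y \<and> x \<otimes>\<^bsub>R\<^esub> y = \<zero>\<^bsub>R\<^esub>"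
    if "x \<in> zdiv_star R" "y \<in> zdiv_star R" for x y
    using adj_iff[OF Zc[OF that(1)] Zc[OF that(2)]] .
  have fan': "GE_adj R (ann_class R x) (ann_class R y) \<longleftrightarrow>
     (ann_class R x \<noteq> ann_class R y \<and> (ann_class R x = c0 \<or> ann_class R y = c0))"
    if "x \<in> zdiv_star R" "y \<in> zdiv_star R" for x y
    using fan V[OF that(1)] V[OF that(2)] by blast
  have F1: "x \<otimes>\<^bsub>R\<^esub> c = \<zero>\<^bsub>R\<^esub>" if x: "x \<in> zdiv_star R" "ann R x \<noteq> ann R c" for x
  proof -
    have "ann_class R x \<noteq> ann_class R c" using ceq[OF x(1) cZ] x(2) by blast
    hence "GE_adj R (ann_class R x) (ann_class R c)" using fan'[OF x(1) cZ] c0c by blast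
    thus ?thesis using adj[OF x(1) cZ] by blast
  qed
  have F2: "x \<otimes>\<^bsub>R\<^esub> y \<noteq> \<zero>\<^bsub>R\<^esub>" if x: "x \<in> zdiv_star R" and y: "y \<in> zdiv_star R" and xc: "ann R x \<noteq> ann R c"
    and yc: "ann R y \<noteq> ann R c" and xy: "ann R x \<noteq> ann R y" for x y
  proof -
    have "ann_class R x \<noteq> c0" "ann_class R y \<noteq> c0" using ceq[OF x cZ] ceq[OF y cZ] xc yc c0c by blast+
    hence "\<not> GE_adj R (ann_class R x) (ann_class R y)" using fan'[OF x y] by blast
    thus ?thesis using adj[OF x y] xy by blast
  qed
  obtain V1 V2 V3 where Vs: "V1 \<in> GE_vertices R" "V2 \<in> GE_vertices R" "V3 \<in> GE_vertices R"
    "V1 \<noteq> c0" "V2 \<noteq> c0" "V3 \<noteq> c0" "V1 \<noteq> V2" "V1 \<noteq> V3" "V2 \<noteq> V3"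
    using three_elems[OF c0 assms(4)] by blast
  obtain y1 y2 y3 where Y: "y1 \<in> zdiv_star R" "y2 \<in> zdiv_star R" "y3 \<in> zdiv_star R"
    and Yv: "V1 = ann_class R y1" "V2 = ann_class R y2" "V3 = ann_class R y3"
    using Vs(1-3) unfolding GE_vertices_def by blast
  have Yc: "ann R y1 \<noteq> ann R c" "ann R y2 \<noteq> ann R c" "ann R y3 \<noteq> ann R c"
    using Vs(4-6) Yv c0c ceq[OF Y(1) cZ] ceq[OF Y(2) cZ] ceq[OF Y(3) cZ] by blast+
  have Yd: "ann R y1 \<noteq> ann R y2" "ann R y1 \<noteq> ann R y3" "ann R y2 \<noteq> ann R y3"
    using Vs(7-9) Yv ceq[OF Y(1) Y(2)] ceq[OF Y(1) Y(3)] ceq[OF Y(2) Y(3)] by blast+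
  interpret S: star R c y1 y2 y3
    by (unfold_locales, fact cZ, fact F1, fact F2, fact Y(1), fact Y(2), fact Y(3),
        fact Yc(1), fact Yc(2), fact Yc(3), fact Yd(1), fact Yd(2), fact Yd(3))
  show ?thesis using S.Ass_eq S.prod3 S.char by blast
qed

end
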